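(* Let $K$ be a finite extension of $\mathbb Q_p$ with ring of integers $\mathcal O_K$ and residue field $\tilde K$, and let $f\in\mathcal O_K(x)$ be a rational map with good reduction. If $f$ has height zero, then every critical point of its reduction $\tilde f$ is the reduction of a critical point of $f$.
   Context: The height of $f$ is the largest integer $h\ge 0$ such that the reduction can be written $\tilde f(x)=\tilde Q(x^{p^h})$ for some rational function $\tilde Q$ over the residue field; $f$ has positive height if and only if the derivative of $\tilde f$ is identically zero. *)

theory Defs
  imports Complex_Main "HOL-Computational_Algebra.Polynomial" "HOL-Computational_Algebra.Primes"
begin

definition nonarch_abs :: "('a::field \<Rightarrow> real) \<Rightarrow> bool" where
  "nonarch_abs v \<longleftrightarrow>
     (\<forall>x. v x \<ge> 0) \<and> (\<forall>x. v x = 0 \<longleftrightarrow> x = 0) \<and>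
     (\<forall>x y. v (x * y) = v x * v y) \<and> (\<forall>x y. v (x + y) \<le> max (v x) (v y))"

definition subfield :: "'a::field set \<Rightarrow> bool" where
  "subfield K \<longleftrightarrow> 0 \<in> K \<and> 1 \<in> K \<and>
     (\<forall>x\<in>K. \<forall>y\<in>K. x + y \<in> K \<and> x - y \<in> K \<and> x * y \<in> K) \<and>
     (\<forall>x\<in>K. inverse x \<in> K)"

definition v_cauchy :: "('a \<Rightarrow> real) \<Rightarrow> (nat \<Rightarrow> 'a::field) \<Rightarrow> bool" where
  "v_cauchy v X \<longleftrightarrow> (\<forall>e>0. \<exists>N. \<forall>m\<ge>N. \<forall>n\<ge>N. v (X m - X n) < e)"

definition v_tendsto :: "('a \<Rightarrow> real) \<Rightarrow> (nat \<Rightarrow> 'a::field) \<Rightarrow> 'a \<Rightarrow> bool" where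
  "v_tendsto v X l \<longleftrightarrow> (\<forall>e>0. \<exists>N. \<forall>n\<ge>N. v (X n - l) < e)"

definition v_complete :: "('a \<Rightarrow> real) \<Rightarrow> 'a::field set \<Rightarrow> bool" where
  "v_complete v K \<longleftrightarrow> (\<forall>X. (\<forall>n. X n \<in> K) \<and> v_cauchy v X \<longrightarrow> (\<exists>l\<in>K. v_tendsto v X l))"

text \<open>The closure of the prime field \<open>\<rat>\<close> inside \<open>K\<close>; when \<open>K\<close> is complete and the
  absolute value is nonarchimedean with \<open>|p| < 1\<close>, this is (a copy of) \<open>\<rat>\<^sub>p\<close>.\<close>
definition Qp_in :: "('a \<Rightarrow> real) \<Rightarrow> 'a::field_char_0 set \<Rightarrow> 'a set" where
  "Qp_in v K = {x \<in> K. \<exists>X. (\<forall>n. X n \<in> \<rat>) \<and> v_tendsto v X x}"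

definition finite_dim_over :: "'a::field set \<Rightarrow> 'a set \<Rightarrow> bool" where
  "finite_dim_over F K \<longleftrightarrow> (\<exists>B. finite B \<and> B \<subseteq> K \<and>
      (\<forall>x\<in>K. \<exists>c. (\<forall>b\<in>B. c b \<in> F) \<and> x = (\<Sum>b\<in>B. c b * b)))"

definition finite_ext_Qp :: "('a \<Rightarrow> real) \<Rightarrow> nat \<Rightarrow> 'a::field_char_0 set \<Rightarrow> bool" where
  "finite_ext_Qp v p K \<longleftrightarrow> prime p \<and> nonarch_abs v \<and> subfield K \<and>
     v (of_nat p) < 1 \<and> v_complete v K \<and> finite_dim_over (Qp_in v K) K"

text \<open>The ambient field (UNIV) is an algebraic closure of \<open>K\<close>.\<close>
definition alg_closure_of :: "'a::field set \<Rightarrow> bool" where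
  "alg_closure_of K \<longleftrightarrow>
     (\<forall>P::'a poly. degree P \<ge> 1 \<longrightarrow> (\<exists>x. poly P x = 0)) \<and>
     (\<forall>x. \<exists>P. P \<noteq> 0 \<and> (\<forall>i. coeff P i \<in> K) \<and> poly P x = 0)"

definition int_ring :: "('a \<Rightarrow> real) \<Rightarrow> 'a set \<Rightarrow> 'a set" where
  "int_ring v K = {x \<in> K. v x \<le> 1}"

text \<open>\<open>red\<close> is the reduction map from the valuation ring of the ambient field onto its
  residue field (the type \<open>'k\<close>), i.e. a surjective ring homomorphism with kernel the
  maximal ideal.\<close>
definition residue_map :: "('a::field \<Rightarrow> real) \<Rightarrow> ('a \<Rightarrow> 'k::field) \<Rightarrow> bool" where
  "residue_map v red \<longleftrightarrow>
     (\<forall>x y. v x \<le> 1 \<longrightarrow> v y \<le> 1 \<longrightarrow> red (x + y) = red x + red y \<and> red (x * y) = red x * red y) \<and>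
     red 1 = 1 \<and> (\<forall>x. v x \<le> 1 \<longrightarrow> (red x = 0 \<longleftrightarrow> v x < 1)) \<and>
     (\<forall>z. \<exists>x. v x \<le> 1 \<and> red x = z)"

text \<open>Reduction of points of \<open>\<P>\<^sup>1\<close> (\<open>None\<close> is the point at infinity).\<close>
definition red_pt :: "('a \<Rightarrow> real) \<Rightarrow> ('a \<Rightarrow> 'k) \<Rightarrow> 'a option \<Rightarrow> 'k option" where
  "red_pt v red z = (case z of None \<Rightarrow> None
      | Some a \<Rightarrow> (if v a \<le> 1 then Some (red a) else None))"

definition rdeg :: "'f::field poly \<Rightarrow> 'f poly \<Rightarrow> nat" where
  "rdeg P Q = max (degree P) (degree Q)"

text \<open>\<open>x^d P(1/x)\<close>\<close>
definition rev_at :: "nat \<Rightarrow> 'f::field poly \<Rightarrow> 'f poly" where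
  "rev_at d P = (\<Sum>i\<le>d. monom (coeff P (d - i)) i)"

definition fin_local_deg :: "'f::field poly \<Rightarrow> 'f poly \<Rightarrow> 'f \<Rightarrow> nat" where
  "fin_local_deg P Q a =
     (if poly Q a \<noteq> 0 then order a (P - smult (poly P a / poly Q a) Q) else order a Q)"

definition local_deg :: "'f::field poly \<Rightarrow> 'f poly \<Rightarrow> 'f option \<Rightarrow> nat" where
  "local_deg P Q z = (case z of Some a \<Rightarrow> fin_local_deg P Q a
      | None \<Rightarrow> fin_local_deg (rev_at (rdeg P Q) P) (rev_at (rdeg P Q) Q) 0)"

definition critical_point :: "'f::field poly \<Rightarrow> 'f poly \<Rightarrow> 'f option \<Rightarrow> bool" where
  "critical_point P Q z \<longleftrightarrow> local_deg P Q z \<ge> 2"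

definition good_reduction :: "('a::field \<Rightarrow> 'k::field) \<Rightarrow> 'a poly \<Rightarrow> 'a poly \<Rightarrow> bool" where
  "good_reduction red P Q \<longleftrightarrow>
     coprime (map_poly red P) (map_poly red Q) \<and>
     rdeg (map_poly red P) (map_poly red Q) = rdeg P Q"

text \<open>The reduction \<open>P/Q\<close> (over a field of characteristic \<open>p\<close>) can be written as
  \<open>A(x^{p^h}) / B(x^{p^h})\<close>.\<close>
definition admits_height :: "nat \<Rightarrow> 'k::field poly \<Rightarrow> 'k poly \<Rightarrow> nat \<Rightarrow> bool" where
  "admits_height p P Q h \<longleftrightarrow> (\<exists>A B. B \<noteq> 0 \<and>
     P * pcompose B (monom 1 (p ^ h)) = Q * pcompose A (monom 1 (p ^ h)))"

definition height_is :: "nat \<Rightarrow> 'k::field poly \<Rightarrow> 'k poly \<Rightarrow> nat \<Rightarrow> bool" where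
  "height_is p P Q h \<longleftrightarrow> admits_height p P Q h \<and> (\<forall>h'. admits_height p P Q h' \<longrightarrow> h' \<le> h)"

end

theory Submission
  imports Defs
begin

locale nav =
  fixes v :: "'a::field_char_0 \<Rightarrow> real" and red :: "'a \<Rightarrow> 'k::field"
  assumes nonarch: "nonarch_abs v" and resm: "residue_map v red"
begin

lemma v_nonneg: "v x \<ge> 0" using nonarch unfolding nonarch_abs_def by blast
lemma v_zero_iff: "v x = 0 \<longleftrightarrow> x = 0" using nonarch unfolding nonarch_abs_def by blast
lemma v_mult: "v (x * y) = v x * v y" using nonarch unfolding nonarch_abs_def by blast
lemma v_add: "v (x + y) \<le> max (v x) (v y)" using nonarch unfolding nonarch_abs_def by blast
lemma v_zero[simp]: "v 0 = 0" using v_zero_iff by blast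
lemma v_one[simp]: "v 1 = 1"
proof -
  have "v 1 = v 1 * v 1" using v_mult[of 1 1] by simp
  moreover have "v 1 \<noteq> 0" using v_zero_iff by simp
  ultimately show ?thesis by simp
qed
lemma v_minus_one: "v (-1) = 1"
proof -
  have "v (-1) * v (-1) = 1" using v_mult[of "-1" "-1"] by simp
  moreover have "v (-1) \<ge> 0" by (rule v_nonneg)
  ultimately show ?thesis by (metis abs_of_nonneg abs_square_eq_1 power2_eq_square)
qed
lemma v_minus[simp]: "v (- x) = v x"
  using v_mult[of "-1" x] v_minus_one by simp
lemma v_diff: "v (x - y) \<le> max (v x) (v y)"
  using v_add[of x "-y"] by simp
lemma v_strict: assumes "v y < v x" shows "v (x + y) = v x"
proof -
  have "v (x + y) \<le> v x" using v_add[of x y] assms by simp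
  moreover have "v x \<le> max (v (x + y)) (v y)" using v_diff[of "x+y" y] by simp
  ultimately show ?thesis using assms by linarith
qed
lemma v_inverse: "v (inverse x) = inverse (v x)"
proof (cases "x = 0")
  case False
  then have "v x * v (inverse x) = 1" using v_mult[of x "inverse x"] by simp
  then show ?thesis using v_zero_iff[of x] False by (metis inverse_unique mult.commute)
qed simp
lemma v_of_nat: "v (of_nat n) \<le> 1"
proof (induction n)
  case (Suc n) then show ?case using v_add[of "of_nat n" 1] by (simp add: add.commute)
qed simp

lemma red_add: "v x \<le> 1 \<Longrightarrow> v y \<le> 1 \<Longrightarrow> red (x + y) = red x + red y"
  using resm unfolding residue_map_def by blast
lemma red_mult: "v x \<le> 1 \<Longrightarrow> v y \<le> 1 \<Longrightarrow> red (x * y) = red x * red y"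
  using resm unfolding residue_map_def by blast
lemma red_one[simp]: "red 1 = 1"
  using resm unfolding residue_map_def by blast
lemma red_zero_iff: "v x \<le> 1 \<Longrightarrow> red x = 0 \<longleftrightarrow> v x < 1"
  using resm unfolding residue_map_def by blast
lemma red_surj: "\<exists>x. v x \<le> 1 \<and> red x = z"
  using resm unfolding residue_map_def by blast
lemma red_zero[simp]: "red 0 = 0" using red_zero_iff[of 0] by simp
lemma red_minus: "v x \<le> 1 \<Longrightarrow> red (- x) = - red x"
  using red_add[of x "-x"] by (simp add: eq_neg_iff_add_eq_0 add.commute)
lemma red_diff: "v x \<le> 1 \<Longrightarrow> v y \<le> 1 \<Longrightarrow> red (x - y) = red x - red y"
  using red_add[of x "-y"] red_minus[of y] by simp
lemma red_of_nat: "red (of_nat n) = of_nat n"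
proof (induction n)
  case (Suc n) then show ?case using red_add[OF v_of_nat[of n], of 1] by (simp add: add.commute)
qed simp
lemma v_one_if_red: "v x \<le> 1 \<Longrightarrow> red x \<noteq> 0 \<Longrightarrow> v x = 1"
  using red_zero_iff by force
lemma v_add1: "v x \<le> 1 \<Longrightarrow> v y \<le> 1 \<Longrightarrow> v (x + y) \<le> 1"
  using v_add[of x y] by simp
lemma v_diff1: "v x \<le> 1 \<Longrightarrow> v y \<le> 1 \<Longrightarrow> v (x - y) \<le> 1"
  using v_diff[of x y] by simp
lemma v_mult1: "v x \<le> 1 \<Longrightarrow> v y \<le> 1 \<Longrightarrow> v (x * y) \<le> 1"
  using v_mult[of x y] by (simp add: mult_le_one v_nonneg)

lemma red_sum: "finite A \<Longrightarrow> (\<forall>x\<in>A. v (f x) \<le> 1) \<Longrightarrow>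
   red (\<Sum>x\<in>A. f x) = (\<Sum>x\<in>A. red (f x)) \<and> v (\<Sum>x\<in>A. f x) \<le> 1"
proof (induction A rule: finite_induct)
  case (insert x F)
  then show ?case using red_add v_add1 by simp
qed simp


abbreviation intg :: "'a poly \<Rightarrow> bool" where "intg F \<equiv> (\<forall>i. v (coeff F i) \<le> 1)"
abbreviation redp :: "'a poly \<Rightarrow> 'k poly" where "redp F \<equiv> map_poly red F"

lemma coeff_redp[simp]: "coeff (redp F) i = red (coeff F i)"
  by (simp add: coeff_map_poly)

lemma intg_mult: assumes "intg A" "intg B" shows "intg (A * B)" and "redp (A * B) = redp A * redp B"
proof -
  show "intg (A * B)" unfolding coeff_mult
  proof
    fix i show "v (\<Sum>ia\<le>i. coeff A ia * coeff B (i - ia)) \<le> 1"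
      using red_sum[of "{..i}" "\<lambda>ia. coeff A ia * coeff B (i - ia)"] assms v_mult1 by simp
  qed
  show "redp (A * B) = redp A * redp B"
    by (rule poly_eqI) (simp add: coeff_mult red_sum assms v_mult1 red_mult)
qed

lemma intg_pderiv: assumes "intg A" shows "intg (pderiv A)" and "redp (pderiv A) = pderiv (redp A)"
proof -
  show "intg (pderiv A)" unfolding coeff_pderiv using assms v_mult1 v_of_nat by blast
  show "redp (pderiv A) = pderiv (redp A)"
    by (rule poly_eqI) (metis coeff_pderiv red_mult assms v_of_nat red_of_nat coeff_redp)
qed

lemma intg_diff: assumes "intg A" "intg B" shows "intg (A - B)" and "redp (A - B) = redp A - redp B"
proof -
  show "intg (A - B)" using assms v_diff1 by simp
  show "redp (A - B) = redp A - redp B"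
    by (rule poly_eqI) (simp add: red_diff assms)
qed

lemma intg_smult: assumes "intg A" "v c \<le> 1" shows "intg (smult c A)" and "redp (smult c A) = smult (red c) (redp A)"
proof -
  show "intg (smult c A)" using assms v_mult1 by simp
  show "redp (smult c A) = smult (red c) (redp A)"
    by (rule poly_eqI) (simp add: red_mult assms)
qed

lemma poly_sum_le: "degree (p::'b::comm_semiring_1 poly) \<le> n \<Longrightarrow> poly p x = (\<Sum>i\<le>n. coeff p i * x ^ i)"
proof -
  assume "degree p \<le> n"
  then have "poly p x = poly (\<Sum>i\<le>n. monom (coeff p i) i) x" using poly_as_sum_of_monoms' by metis
  then show ?thesis by (simp only: poly_sum poly_monom)
qed

lemma v_power1: "v a \<le> 1 \<Longrightarrow> v (a ^ n) \<le> 1"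
  by (induction n) (auto simp: v_mult1)

lemma red_power: "v a \<le> 1 \<Longrightarrow> red (a ^ n) = red a ^ n"
  by (induction n) (auto simp: red_mult v_power1)

lemma red_poly: assumes "intg F" "v a \<le> 1"
  shows "red (poly F a) = poly (redp F) (red a)" and "v (poly F a) \<le> 1"
proof -
  have dg: "degree (redp F) \<le> degree F" by (rule degree_le) (simp add: coeff_eq_0)
  have vt: "\<forall>i\<in>{..degree F}. v (coeff F i * a ^ i) \<le> 1" using assms v_mult1 v_power1 by blast
  show "red (poly F a) = poly (redp F) (red a)"
  proof -
    have "poly (redp F) (red a) = (\<Sum>i\<le>degree F. coeff (redp F) i * red a ^ i)" by (rule poly_sum_le[OF dg])
    then show ?thesis unfolding poly_altdef[of F] using red_sum[OF _ vt]
    by (simp add: red_mult assms v_power1 red_power)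
  qed
  show "v (poly F a) \<le> 1" unfolding poly_altdef using red_sum[OF _ vt] by simp
qed


lemma lin_coeff: "coeff ([:-g,1:] * (H::'a poly)) k = (case k of 0 \<Rightarrow> 0 | Suc j \<Rightarrow> coeff H j) - g * coeff H k"
  by (cases k) (auto simp: coeff_pCons)

lemma lin_factor:
  assumes ac: "\<forall>P::'a poly. degree P \<ge> 1 \<longrightarrow> (\<exists>x. poly P x = 0)"
    and "degree (F::'a poly) \<noteq> 0"
  obtains g H where "poly F g = 0" "F = [:-g,1:] * H" "H \<noteq> 0" "degree H < degree F"
proof -
  have "degree F \<ge> 1" using assms(2) by simp
  then obtain g where g: "poly F g = 0" using ac by blast
  then obtain H where H: "F = [:-g,1:] * H" using poly_eq_0_iff_dvd by (metis dvdE)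
  have H0: "H \<noteq> 0" using assms(2) H by auto
  have "degree F = Suc (degree H)" unfolding H by (subst degree_mult_eq) (use H0 in auto)
  then have "degree H < degree F" by simp
  with that g H H0 show ?thesis by blast
qed

lemma gauss_pt:
  assumes ac: "\<forall>P::'a poly. degree P \<ge> 1 \<longrightarrow> (\<exists>x. poly P x = 0)"
  shows "F \<noteq> 0 \<Longrightarrow> (\<forall>g. poly F g = 0 \<longrightarrow> 1 \<le> v (a - g) \<and> v g \<le> v (a - g)) \<Longrightarrow>
     v (coeff F k) \<le> v (poly F a)"
proof (induction "degree F" arbitrary: F k rule: less_induct)
  case less
  show ?case
  proof (cases "degree F = 0")
    case True
    then obtain c where Fc: "F = [:c:]" using degree_eq_zeroE by blast
    show ?thesis
    proof (cases k)
      case 0 then show ?thesis unfolding Fc by simp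
    next
      case (Suc j) then have "coeff F k = 0" unfolding Fc by simp
      then show ?thesis using v_nonneg[of "poly F a"] by simp
    qed
  next
    case False
    then obtain g H where g: "poly F g = 0" and H: "F = [:-g,1:] * H" and H0: "H \<noteq> 0"
      and dH: "degree H < degree F" using lin_factor[OF ac] by metis
    have rH: "\<forall>g'. poly H g' = 0 \<longrightarrow> 1 \<le> v (a - g') \<and> v g' \<le> v (a - g')" using less.prems(2) H by auto
    have IH: "\<And>j. v (coeff H j) \<le> v (poly H a)" using less.hyps[OF dH H0 rH] by blast
    have vg: "1 \<le> v (a - g)" "v g \<le> v (a - g)" using less.prems(2) g by auto
    have "poly F a = (a - g) * poly H a" unfolding H by (simp add: algebra_simps)
    then have pF: "v (poly F a) = v (a - g) * v (poly H a)" by (simp add: v_mult)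
    have c1: "v (case k of 0 \<Rightarrow> 0 | Suc j \<Rightarrow> coeff H j) \<le> v (poly H a)"
    proof (cases k)
      case 0 then show ?thesis using v_nonneg[of "poly H a"] by simp
    next
      case (Suc j) then show ?thesis using IH[of j] by simp
    qed
    have c2: "v (g * coeff H k) \<le> v (a - g) * v (poly H a)" unfolding v_mult
      by (rule mult_mono[OF vg(2) IH v_nonneg v_nonneg])
    have "1 * v (poly H a) \<le> v (a - g) * v (poly H a)"
      by (rule mult_right_mono[OF vg(1) v_nonneg])
    then have c1': "v (poly H a) \<le> v (a - g) * v (poly H a)" by simp
    have cF: "coeff F k = (case k of 0 \<Rightarrow> 0 | Suc j \<Rightarrow> coeff H j) - g * coeff H k"
      unfolding H by (rule lin_coeff)
    have "v (coeff F k) \<le> max (v (case k of 0 \<Rightarrow> 0 | Suc j \<Rightarrow> coeff H j)) (v (g * coeff H k))"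
      unfolding cF by (rule v_diff)
    then show ?thesis unfolding pF using c1 c1' c2 by linarith
  qed
qed

lemma gauss_inf:
  assumes ac: "\<forall>P::'a poly. degree P \<ge> 1 \<longrightarrow> (\<exists>x. poly P x = 0)"
  shows "F \<noteq> 0 \<Longrightarrow> (\<forall>g. poly F g = 0 \<longrightarrow> v g \<le> 1) \<Longrightarrow>
     v (coeff F k) \<le> v (lead_coeff F)"
proof (induction "degree F" arbitrary: F k rule: less_induct)
  case less
  show ?case
  proof (cases "degree F = 0")
    case True
    then obtain c where Fc: "F = [:c:]" using degree_eq_zeroE by blast
    show ?thesis
    proof (cases k)
      case 0 then show ?thesis unfolding Fc by simp
    next
      case (Suc j) then have "coeff F k = 0" unfolding Fc by simp
      then show ?thesis using v_nonneg[of "lead_coeff F"] by simp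
    qed
  next
    case False
    then obtain g H where g: "poly F g = 0" and H: "F = [:-g,1:] * H" and H0: "H \<noteq> 0"
      and dH: "degree H < degree F" using lin_factor[OF ac] by metis
    have rH: "\<forall>g'. poly H g' = 0 \<longrightarrow> v g' \<le> 1" using less.prems(2) H by auto
    have IH: "\<And>j. v (coeff H j) \<le> v (lead_coeff H)" using less.hyps[OF dH H0 rH] by blast
    have vg: "v g \<le> 1" using less.prems(2) g by auto
    have "lead_coeff F = lead_coeff [:-g,1:] * lead_coeff H" using H lead_coeff_mult by metis
    then have pF: "lead_coeff F = lead_coeff H" by simp
    have c1: "v (case k of 0 \<Rightarrow> 0 | Suc j \<Rightarrow> coeff H j) \<le> v (lead_coeff H)"
    proof (cases k)
      case 0 then show ?thesis using v_nonneg[of "lead_coeff H"] by simp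
    next
      case (Suc j) then show ?thesis using IH[of j] by simp
    qed
    have "v g * v (coeff H k) \<le> 1 * v (lead_coeff H)"
      by (rule mult_mono[OF vg IH]) (simp_all add: v_nonneg)
    then have c2: "v (g * coeff H k) \<le> v (lead_coeff H)" by (simp add: v_mult)
    have cF: "coeff F k = (case k of 0 \<Rightarrow> 0 | Suc j \<Rightarrow> coeff H j) - g * coeff H k"
      unfolding H by (rule lin_coeff)
    have "v (coeff F k) \<le> max (v (case k of 0 \<Rightarrow> 0 | Suc j \<Rightarrow> coeff H j)) (v (g * coeff H k))"
      unfolding cF by (rule v_diff)
    then show ?thesis unfolding pF using c1 c2 by linarith
  qed
qed

lemma bigroot:
  assumes "intg F" "poly F a = 0" "v a > 1"
  shows "v (lead_coeff F) < 1"
proof -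
  obtain H where H: "F = [:-a,1:] * H" using assms(2) poly_eq_0_iff_dvd by (metis dvdE)
  have va: "v a > 0" using assms(3) by simp
  have key: "v (coeff H k) \<le> inverse (v a)" for k
  proof (induction k)
    case 0
    have "coeff F 0 = - a * coeff H 0" using H by simp
    then have "v (coeff F 0) = v a * v (coeff H 0)" by (simp add: v_mult)
    then have "v a * v (coeff H 0) \<le> 1" using assms(1) by metis
    then show ?case using va by (simp add: field_simps)
  next
    case (Suc k)
    have "coeff F (Suc k) = coeff H k - a * coeff H (Suc k)" using H lin_coeff[of a H "Suc k"] by simp
    then have "a * coeff H (Suc k) = coeff H k - coeff F (Suc k)" by (simp add: algebra_simps)
    moreover have "v (coeff H k) \<le> 1" using Suc.IH assms(3) 
      by (smt (verit) le_imp_inverse_le inverse_1 va)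
    ultimately have "v a * v (coeff H (Suc k)) \<le> 1" using v_diff1 assms(1) v_mult by metis
    then show ?case using va by (simp add: field_simps)
  qed
  have "lead_coeff F = lead_coeff [:-a,1:] * lead_coeff H" using H lead_coeff_mult by metis
  then have "lead_coeff F = lead_coeff H" by simp
  then have "v (lead_coeff F) \<le> inverse (v a)" using key by simp
  moreover have "inverse (v a) < 1" using assms(3) by (simp add: inverse_less_1_iff)
  ultimately show ?thesis by linarith
qed

end

lemma ord2_imp:
  fixes R :: "'f::field poly"
  assumes "order a R \<ge> 2"
  shows "poly R a = 0 \<and> poly (pderiv R) a = 0"
proof (cases "R = 0")
  case False
  then have "[:-a,1:]^2 dvd R" using assms order_divides by blast
  then obtain S where S: "R = [:-a,1:]^2 * S" by (elim dvdE)
  show ?thesis unfolding S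
    by (simp add: pderiv_mult pderiv_power_Suc pderiv_pCons numeral_2_eq_2 del: power_Suc)
qed simp

lemma imp_ord2:
  fixes R :: "'f::field_char_0 poly"
  assumes "R \<noteq> 0" "poly R a = 0" "poly (pderiv R) a = 0"
  shows "order a R \<ge> 2"
proof -
  have d: "pderiv R \<noteq> 0"
  proof
    assume "pderiv R = 0"
    then have "degree R = 0" using pderiv_eq_0_iff by blast
    then obtain c where "R = [:c:]" using degree_eq_zeroE by blast
    then show False using assms by simp
  qed
  have "order a (pderiv R) \<noteq> 0" using order_root assms(3) d by blast
  then show ?thesis using order_pderiv[OF assms(1,2)] by simp
qed

lemma pderiv0_coeff:
  fixes A :: "'k::field poly"
  assumes "prime p" "of_nat p = (0::'k)" "pderiv A = 0" "coeff A m \<noteq> 0"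
  shows "p dvd m"
proof (cases m)
  case (Suc n)
  have "of_nat m * coeff A m = 0" using assms(3) coeff_pderiv[of A n] Suc by simp
  then have m0: "of_nat m = (0::'k)" using assms(4) by simp
  show ?thesis
  proof (rule ccontr)
    assume "\<not> p dvd m"
    then have "coprime p m" using assms(1) prime_imp_coprime by blast
    then have g: "gcd p m = 1" by simp
    have "p \<noteq> 0" using assms(1) by auto
    then obtain x y where "p * x = m * y + gcd p m" using bezout_nat by blast
    then have "(of_nat (p * x) :: 'k) = of_nat (m * y + 1)" using g by simp
    then have "(0::'k) = 1" using assms(2) m0 by simp
    then show False by simp
  qed
qed simp

lemma pcomp_monom_coeff:
  fixes F :: "'k::comm_ring_1 poly"
  assumes "0 < p"
  shows "coeff (pcompose F (monom 1 p)) m = (if p dvd m then coeff F (m div p) else 0)"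
proof (induction F arbitrary: m)
  case 0
  then show ?case by simp
next
  case (pCons a F)
  have e: "coeff (pcompose (pCons a F) (monom 1 p)) m =
     (if m = 0 then a else 0) + (if m < p then 0 else coeff (pcompose F (monom 1 p)) (m - p))"
    unfolding pcompose_pCons coeff_add coeff_monom_mult by (simp add: coeff_pCons split: nat.split)
  show ?case
  proof (cases "m < p")
    case True
    show ?thesis
    proof (cases "m = 0")
      case True
      then show ?thesis unfolding e using assms by simp
    next
      case f: False
      then have "\<not> p dvd m" using True nat_dvd_not_less by blast
      then show ?thesis unfolding e using True f by simp
    qed
  next
    case False
    then have m0: "m \<noteq> 0" using assms by auto
    have dv: "p dvd (m - p) \<longleftrightarrow> p dvd m" using False by (simp add: dvd_diff_nat dvd_minus_self)
    have dd: "(m - p) div p = m div p - 1 \<and> m div p \<noteq> 0" if pm: "p dvd m"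
    proof -
      obtain q where q: "m = p * q" using pm by (elim dvdE)
      have "q \<noteq> 0" using q m0 by auto
      moreover have "m - p = p * (q - 1)" using q by (simp add: diff_mult_distrib2)
      ultimately show ?thesis using q assms by simp
    qed
    have L: "coeff (pcompose (pCons a F) (monom 1 p)) m = coeff (pcompose F (monom 1 p)) (m - p)"
      unfolding e using m0 False by simp
    show ?thesis
    proof (cases "p dvd m")
      case True
      obtain k where k: "m div p = Suc k" using dd[OF True] not0_implies_Suc by blast
      have "coeff (pcompose F (monom 1 p)) (m - p) = coeff F k"
        unfolding pCons.IH using dv True dd[OF True] k by simp
      then show ?thesis unfolding L using True k by simp
    next
      case f: False
      show ?thesis unfolding L pCons.IH using dv f by simp
    qed
  qed
qed

lemma pderiv0_pcomp:
  fixes A :: "'k::field poly"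
  assumes "prime p" "of_nat p = (0::'k)" "pderiv A = 0"
  shows "\<exists>B. A = pcompose B (monom 1 p)"
proof -
  have p0: "0 < p" using assms(1) prime_gt_0_nat by blast
  define B where "B = (\<Sum>n\<le>degree A. monom (coeff A (p*n)) n)"
  have cB: "coeff B n = (if n \<le> degree A then coeff A (p*n) else 0)" for n
    unfolding B_def coeff_sum by (simp add: coeff_monom)
  have "A = pcompose B (monom 1 p)"
  proof (rule poly_eqI)
    fix m
    show "coeff A m = coeff (pcompose B (monom 1 p)) m"
    proof (cases "p dvd m")
      case True
      then obtain q where q: "m = p * q" by (elim dvdE)
      have "q \<le> m" using q p0 by simp
      then have "\<not> q \<le> degree A \<Longrightarrow> coeff A m = 0" by (intro coeff_eq_0) simp
      then show ?thesis unfolding pcomp_monom_coeff[OF p0] cB using True q p0 by auto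
    next
      case False
      then have "coeff A m = 0" using pderiv0_coeff[OF assms] by blast
      then show ?thesis unfolding pcomp_monom_coeff[OF p0] using False by simp
    qed
  qed
  then show ?thesis by blast
qed

lemma degree_pderiv_less:
  fixes B :: "'k::field poly"
  assumes "pderiv B \<noteq> 0"
  shows "degree (pderiv B) < degree B"
proof -
  have "degree B \<noteq> 0"
  proof
    assume "degree B = 0"
    then have "pderiv B = 0" by (intro poly_eqI) (simp add: coeff_pderiv coeff_eq_0)
    then show False using assms by simp
  qed
  moreover have "degree (pderiv B) \<le> degree B - 1"
    by (intro degree_le) (simp add: coeff_pderiv coeff_eq_0)
  ultimately show ?thesis by simp
qed

lemma dvd_pderiv_zero:
  fixes B :: "'k::field poly"
  assumes "B dvd pderiv B" shows "pderiv B = 0"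
proof (rule ccontr)
  assume "pderiv B \<noteq> 0"
  then show False using dvd_imp_degree_le[OF assms] degree_pderiv_less by fastforce
qed

lemma poly_bezout:
  fixes A B :: "'k::field poly"
  assumes "coprime A B"
  shows "\<exists>U V. A * U + B * V = 1"
proof -
  define S where "S = {g. g \<noteq> 0 \<and> (\<exists>U V. g = A * U + B * V)}"
  have "A \<noteq> 0 \<or> B \<noteq> 0" using assms by auto
  then have "\<exists>g. g \<in> S"
  proof
    assume "A \<noteq> 0" then have "A \<in> S" unfolding S_def by (intro CollectI conjI exI[of _ 1] exI[of _ 0]) auto
    then show ?thesis by blast
  next
    assume "B \<noteq> 0" then have "B \<in> S" unfolding S_def by (intro CollectI conjI exI[of _ 0] exI[of _ 1]) auto
    then show ?thesis by blast
  qed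
  then obtain g where gS: "g \<in> S" and gmin: "\<And>h. h \<in> S \<Longrightarrow> degree g \<le> degree h"
    using ex_has_least_nat[of "\<lambda>g. g \<in> S" _ degree] by blast
  from gS obtain U V where g0: "g \<noteq> 0" and gUV: "g = A * U + B * V" unfolding S_def by blast
  have divs: "g dvd X" if X: "X = A * U' + B * V'" for X U' V'
  proof -
    have r: "X mod g = A * (U' - (X div g) * U) + B * (V' - (X div g) * V)"
      using X gUV by (simp add: mod_div_mult_eq[symmetric] minus_div_mult_eq_mod[symmetric] algebra_simps)
    have "X mod g = 0"
    proof (rule ccontr)
      assume nz: "X mod g \<noteq> 0"
      then have "X mod g \<in> S" unfolding S_def using r by blast
      then have "degree g \<le> degree (X mod g)" by (rule gmin)
      moreover have "degree (X mod g) < degree g" using degree_mod_less'[OF g0 nz] .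
      ultimately show False by simp
    qed
    then show ?thesis by (simp add: dvd_eq_mod_eq_0)
  qed
  have "g dvd A" by (rule divs[of A 1 0]) simp
  moreover have "g dvd B" by (rule divs[of B 0 1]) simp
  ultimately have "is_unit g" using assms unfolding coprime_def by blast
  then obtain h where "1 = g * h" by (elim dvdE)
  then have "A * (U * h) + B * (V * h) = 1" using gUV by (simp add: algebra_simps)
  then show ?thesis by blast
qed

lemma poly_euclid:
  fixes A B C :: "'k::field poly"
  assumes "coprime A B" "B dvd A * C"
  shows "B dvd C"
proof -
  obtain U V where "A * U + B * V = 1" using poly_bezout[OF assms(1)] by blast
  then have "C = (A * C) * U + B * (V * C)" by (metis mult.commute mult.left_commute distrib_left mult_1_right)
  moreover have "B dvd (A * C) * U + B * (V * C)" using assms(2) by simp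
  ultimately show ?thesis by metis
qed

lemma wronsk_nonzero:
  fixes A B :: "'k::field poly"
  assumes "prime p" "of_nat p = (0::'k)" "coprime A B" "height_is p A B 0"
  shows "pderiv A * B - A * pderiv B \<noteq> 0"
proof
  assume W: "pderiv A * B - A * pderiv B = 0"
  have B0: "B \<noteq> 0"
  proof
    assume "B = 0"
    then have "A \<noteq> 0" using assms(3) by auto
    moreover from assms(4) obtain A' B' where "B' \<noteq> 0" "A * pcompose B' (monom 1 (p ^ 0)) = B * pcompose A' (monom 1 (p ^ 0))"
      unfolding height_is_def admits_height_def by blast
    ultimately show False using \<open>B = 0\<close> by (simp add: monom_altdef)
  qed
  have e: "pderiv A * B = A * pderiv B" using W by simp
  have "B dvd A * pderiv B" using e by (metis dvd_triv_right)
  then have "B dvd pderiv B" using poly_euclid[OF assms(3)] by blast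
  then have dB: "pderiv B = 0" by (rule dvd_pderiv_zero)
  have "A dvd pderiv A * B" unfolding e by simp
  moreover have "coprime B A" using assms(3) by (metis coprime_commute)
  ultimately have "A dvd pderiv A" using poly_euclid[of B A "pderiv A"] by (metis mult.commute)
  then have dA: "pderiv A = 0" by (rule dvd_pderiv_zero)
  obtain CA where CA: "A = pcompose CA (monom 1 p)" using pderiv0_pcomp[OF assms(1,2) dA] by blast
  obtain CB where CB: "B = pcompose CB (monom 1 p)" using pderiv0_pcomp[OF assms(1,2) dB] by blast
  have "CB \<noteq> 0" using CB B0 by auto
  then have "admits_height p A B 1" unfolding admits_height_def
    by (intro exI[of _ CA] exI[of _ CB]) (simp add: CA[symmetric] CB[symmetric] mult.commute)
  then show False using assms(4) unfolding height_is_def by fastforce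
qed

lemma coeff_mult_top:
  fixes A B :: "'f::comm_ring_1 poly"
  assumes "degree A \<le> m" "degree B \<le> k"
  shows "coeff (A * B) (m + k) = coeff A m * coeff B k"
proof -
  have "coeff (A * B) (m + k) = (\<Sum>i\<in>{m}. coeff A i * coeff B (m + k - i))"
    unfolding coeff_mult
  proof (rule sum.mono_neutral_right)
    show "\<forall>i\<in>{..m + k} - {m}. coeff A i * coeff B (m + k - i) = 0"
    proof
      fix i assume i: "i \<in> {..m + k} - {m}"
      show "coeff A i * coeff B (m + k - i) = 0"
      proof (cases "i < m")
        case True then have "coeff B (m + k - i) = 0" using assms(2) by (intro coeff_eq_0) simp
        then show ?thesis by simp
      next
        case False then have "coeff A i = 0" using assms(1) i by (intro coeff_eq_0) simp
        then show ?thesis by simp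
      qed
    qed
  qed auto
  then show ?thesis by simp
qed

lemma coeff_mult_top1:
  fixes A B :: "'f::comm_ring_1 poly"
  assumes "degree A \<le> m" "degree B \<le> Suc k"
  shows "coeff (A * B) (m + k) = coeff A m * coeff B k + (if m = 0 then 0 else coeff A (m - 1) * coeff B (Suc k))"
proof -
  have "coeff (A * B) (m + k) = (\<Sum>i\<in>{m - 1..m}. coeff A i * coeff B (m + k - i))"
    unfolding coeff_mult
  proof (rule sum.mono_neutral_right)
    show "\<forall>i\<in>{..m + k} - {m - 1..m}. coeff A i * coeff B (m + k - i) = 0"
    proof
      fix i assume i: "i \<in> {..m + k} - {m - 1..m}"
      show "coeff A i * coeff B (m + k - i) = 0"
      proof (cases "i < m")
        case True then have "coeff B (m + k - i) = 0" using assms(2) i by (intro coeff_eq_0) auto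
        then show ?thesis by simp
      next
        case False then have "coeff A i = 0" using assms(1) i by (intro coeff_eq_0) auto
        then show ?thesis by simp
      qed
    qed
  qed auto
  also have "\<dots> = coeff A m * coeff B k + (if m = 0 then 0 else coeff A (m - 1) * coeff B (Suc k))"
  proof (cases m)
    case (Suc j)
    have "{m - 1..m} = {j, Suc j}" using Suc by auto
    then show ?thesis using Suc by (simp add: add.commute)
  qed simp
  finally show ?thesis .
qed

lemma degree_pderiv_le1:
  fixes P :: "'f::field poly"
  shows "degree P \<le> d \<Longrightarrow> degree (pderiv P) \<le> d - 1"
  by (intro degree_le) (simp add: coeff_pderiv coeff_eq_0)

lemma wronsk_top:
  fixes P Q :: "'f::field poly"
  assumes "degree P \<le> d" "degree Q \<le> d" "d \<ge> 1"
  shows "coeff (pderiv P * Q - P * pderiv Q) (2 * d - 1) = 0"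
    and "coeff (pderiv P * Q - P * pderiv Q) (2 * d - 2) =
         coeff P d * coeff Q (d - 1) - coeff P (d - 1) * coeff Q d"
    and "degree (pderiv P * Q - P * pderiv Q) \<le> 2 * d - 1"
proof -
  have dP: "degree (pderiv P) \<le> d - 1" using degree_pderiv_le1 assms(1) .
  have dQ: "degree (pderiv Q) \<le> d - 1" using degree_pderiv_le1 assms(2) .
  have cP: "coeff (pderiv P) (d - 1) = of_nat d * coeff P d" using assms(3) by (simp add: coeff_pderiv)
  have cQ: "coeff (pderiv Q) (d - 1) = of_nat d * coeff Q d" using assms(3) by (simp add: coeff_pderiv)
  have e1: "2 * d - 1 = (d - 1) + d" using assms(3) by simp
  have "coeff (pderiv P * Q) (2 * d - 1) = coeff (pderiv P) (d - 1) * coeff Q d"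
    unfolding e1 by (rule coeff_mult_top[OF dP assms(2)])
  moreover have "coeff (pderiv Q * P) (2 * d - 1) = coeff (pderiv Q) (d - 1) * coeff P d"
    unfolding e1 by (rule coeff_mult_top[OF dQ assms(1)])
  ultimately show "coeff (pderiv P * Q - P * pderiv Q) (2 * d - 1) = 0"
    using cP cQ by (simp add: mult.commute mult.left_commute)
  have e2: "2 * d - 2 = (d - 1) + (d - 1)" using assms(3) by simp
  have s: "Suc (d - 1) = d" using assms(3) by simp
  have a1: "coeff (pderiv P * Q) (2 * d - 2) = coeff (pderiv P) (d - 1) * coeff Q (d - 1) +
      (if d - 1 = 0 then 0 else coeff (pderiv P) (d - 1 - 1) * coeff Q d)"
    unfolding e2 using coeff_mult_top1[OF dP, of Q "d - 1"] assms(2) s by simp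
  have a2: "coeff (pderiv Q * P) (2 * d - 2) = coeff (pderiv Q) (d - 1) * coeff P (d - 1) +
      (if d - 1 = 0 then 0 else coeff (pderiv Q) (d - 1 - 1) * coeff P d)"
    unfolding e2 using coeff_mult_top1[OF dQ, of P "d - 1"] assms(1) s by simp
  show "coeff (pderiv P * Q - P * pderiv Q) (2 * d - 2) =
         coeff P d * coeff Q (d - 1) - coeff P (d - 1) * coeff Q d"
  proof (cases "d = 1")
    case True
    then show ?thesis using a1 a2 cP cQ by (simp add: mult.commute algebra_simps)
  next
    case False
    then have s2: "Suc (d - 1 - 1) = d - 1" using assms(3) by simp
    have c2P: "coeff (pderiv P) (d - 1 - 1) = of_nat (d - 1) * coeff P (d - 1)"
      using coeff_pderiv[of P "d - 1 - 1"] s2 by simp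
    have c2Q: "coeff (pderiv Q) (d - 1 - 1) = of_nat (d - 1) * coeff Q (d - 1)"
      using coeff_pderiv[of Q "d - 1 - 1"] s2 by simp
    have od: "of_nat (d - 1) = (of_nat d - 1 :: 'f)" using assms(3) by (simp add: of_nat_diff)
    have nd: "d - 1 \<noteq> 0" using False assms(3) by simp
    have a1': "coeff (pderiv P * Q) (2 * d - 2) = of_nat d * coeff P d * coeff Q (d - 1) + (of_nat d - 1) * coeff P (d - 1) * coeff Q d"
      using a1 cP c2P nd od by simp
    have a2': "coeff (P * pderiv Q) (2 * d - 2) = of_nat d * coeff Q d * coeff P (d - 1) + (of_nat d - 1) * coeff Q (d - 1) * coeff P d"
      using a2 cQ c2Q nd od by (simp add: mult.commute)
    show ?thesis unfolding coeff_diff a1' a2' by (simp add: algebra_simps)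
  qed
  show "degree (pderiv P * Q - P * pderiv Q) \<le> 2 * d - 1"
  proof -
    have "degree (pderiv P * Q) \<le> 2 * d - 1"
      using degree_mult_le[of "pderiv P" Q] dP assms(2) e1 by linarith
    moreover have "degree (P * pderiv Q) \<le> 2 * d - 1"
      using degree_mult_le[of P "pderiv Q"] dQ assms(1) e1 by linarith
    ultimately show ?thesis using degree_diff_le by blast
  qed
qed

lemma coeff_rev_at: "coeff (rev_at d P) i = (if i \<le> d then coeff P (d - i) else 0)"
  unfolding rev_at_def coeff_sum by (simp add: coeff_monom)

lemma rev_smult_inj:
  fixes P Q :: "'f::field poly"
  assumes "degree P \<le> d" "degree Q \<le> d" "rev_at d P = smult c (rev_at d Q)"
  shows "P = smult c Q"
proof (rule poly_eqI)
  fix j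
  show "coeff P j = coeff (smult c Q) j"
  proof (cases "j \<le> d")
    case True
    have "coeff (rev_at d P) (d - j) = coeff (smult c (rev_at d Q)) (d - j)" using assms(3) by simp
    then show ?thesis using True by (simp add: coeff_rev_at)
  next
    case False
    then show ?thesis using assms(1,2) by (simp add: coeff_eq_0)
  qed
qed

lemma wr_rev0:
  fixes A B :: "'f::field poly"
  assumes "d \<ge> 1"
  shows "poly (pderiv (rev_at d A) * rev_at d B - rev_at d A * pderiv (rev_at d B)) 0 =
     coeff A (d - 1) * coeff B d - coeff A d * coeff B (d - 1)"
  using assms by (simp add: poly_0_coeff_0 coeff_mult_0 coeff_pderiv coeff_rev_at)

lemma crit_W:
  fixes P Q :: "'f::field_char_0 poly"
  assumes np: "\<forall>c. P \<noteq> smult c Q" and Q0: "Q \<noteq> 0"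
    and W: "poly (pderiv P * Q - P * pderiv Q) a = 0"
    and nc: "poly Q a = 0 \<longrightarrow> poly P a \<noteq> 0"
  shows "fin_local_deg P Q a \<ge> 2"
proof (cases "poly Q a = 0")
  case True
  then have "poly P a \<noteq> 0" using nc by blast
  moreover have "poly P a * poly (pderiv Q) a = 0" using W True by simp
  ultimately have "poly (pderiv Q) a = 0" by simp
  then have "order a Q \<ge> 2" using imp_ord2[OF Q0 True] by blast
  then show ?thesis unfolding fin_local_deg_def using True by simp
next
  case False
  define c where "c = poly P a / poly Q a"
  define R where "R = P - smult c Q"
  have R0: "R \<noteq> 0" using np unfolding R_def by auto
  have r1: "poly R a = 0" unfolding R_def c_def using False by simp
  have "poly (pderiv P) a * poly Q a = poly P a * poly (pderiv Q) a" using W by simp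
  then have "poly (pderiv P) a = c * poly (pderiv Q) a" unfolding c_def using False
    by (simp add: field_simps)
  then have r2: "poly (pderiv R) a = 0" unfolding R_def by (simp add: pderiv_diff pderiv_smult)
  have "order a R \<ge> 2" using imp_ord2[OF R0 r1 r2] .
  then show ?thesis unfolding fin_local_deg_def using False c_def R_def by simp
qed

lemma crit_to_W:
  fixes A B :: "'f::field poly"
  assumes "fin_local_deg A B b \<ge> 2"
  shows "poly (pderiv A * B - A * pderiv B) b = 0"
proof (cases "poly B b = 0")
  case True
  then have "order b B \<ge> 2" using assms unfolding fin_local_deg_def by simp
  then have "poly (pderiv B) b = 0" using ord2_imp by blast
  then show ?thesis using True by simp
next
  case False
  define c where "c = poly A b / poly B b"
  have "order b (A - smult c B) \<ge> 2" using assms False unfolding fin_local_deg_def c_def by simp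
  then have "poly (A - smult c B) b = 0 \<and> poly (pderiv (A - smult c B)) b = 0" using ord2_imp by blast
  then have "poly A b = c * poly B b" "poly (pderiv A) b = c * poly (pderiv B) b"
    by (simp_all add: pderiv_diff pderiv_smult)
  then show ?thesis by simp
qed

lemma topnz:
  fixes A B :: "'f::field poly"
  assumes "rdeg A B = d" "d \<ge> 1"
  shows "coeff A d \<noteq> 0 \<or> coeff B d \<noteq> 0" "degree A \<le> d" "degree B \<le> d"
proof -
  show "degree A \<le> d" "degree B \<le> d" using assms(1) unfolding rdeg_def by auto
  have "degree A = d \<or> degree B = d" using assms(1) unfolding rdeg_def by (simp add: max_def split: if_splits)
  then show "coeff A d \<noteq> 0 \<or> coeff B d \<noteq> 0" using assms(2)
    by (metis leading_coeff_0_iff degree_0 not_one_le_zero)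
qed

context nav
begin

lemma red_wronsk:
  assumes "intg P" "intg Q"
  shows "intg (pderiv P * Q - P * pderiv Q)"
    and "redp (pderiv P * Q - P * pderiv Q) = pderiv (redp P) * redp Q - redp P * pderiv (redp Q)"
proof -
  have a: "intg (pderiv P * Q)" "redp (pderiv P * Q) = pderiv (redp P) * redp Q"
    using intg_mult[OF intg_pderiv(1)[OF assms(1)] assms(2)] intg_pderiv(2)[OF assms(1)] by auto
  have b: "intg (P * pderiv Q)" "redp (P * pderiv Q) = redp P * pderiv (redp Q)"
    using intg_mult[OF assms(1) intg_pderiv(1)[OF assms(2)]] intg_pderiv(2)[OF assms(2)] by auto
  show "intg (pderiv P * Q - P * pderiv Q)" using intg_diff(1)[OF a(1) b(1)] .
  show "redp (pderiv P * Q - P * pderiv Q) = pderiv (redp P) * redp Q - redp P * pderiv (redp Q)"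
    using intg_diff(2)[OF a(1) b(1)] a(2) b(2) by simp
qed

lemma some_unit_coeff:
  assumes "intg F" "redp F \<noteq> 0"
  obtains k where "v (coeff F k) = 1"
proof -
  obtain k where "coeff (redp F) k \<noteq> 0" using assms(2) by (metis poly_eqI coeff_0)
  then have "red (coeff F k) \<noteq> 0" by simp
  then have "v (coeff F k) = 1" using v_one_if_red assms(1) by blast
  then show ?thesis using that by blast
qed

lemma lift_root:
  assumes ac: "\<forall>P::'a poly. degree P \<ge> 1 \<longrightarrow> (\<exists>x. poly P x = 0)"
    and iF: "intg F" and nz: "redp F \<noteq> 0" and rt: "poly (redp F) b = 0"
  shows "\<exists>\<alpha>. v \<alpha> \<le> 1 \<and> red \<alpha> = b \<and> poly F \<alpha> = 0"
proof (rule ccontr)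
  assume no: "\<not> ?thesis"
  obtain a where a: "v a \<le> 1" "red a = b" using red_surj by blast
  have F0: "F \<noteq> 0" using nz by auto
  have hyp: "\<forall>g. poly F g = 0 \<longrightarrow> 1 \<le> v (a - g) \<and> v g \<le> v (a - g)"
  proof (intro allI impI)
    fix g assume g: "poly F g = 0"
    show "1 \<le> v (a - g) \<and> v g \<le> v (a - g)"
    proof (cases "v g \<le> 1")
      case True
      then have "red g \<noteq> b" using no g by blast
      then have "red (a - g) \<noteq> 0" using red_diff[OF a(1) True] a(2) by simp
      then have "v (a - g) = 1" using v_one_if_red v_diff1[OF a(1) True] by blast
      then show ?thesis using True by simp
    next
      case False
      then have "v a < v (- g)" using a(1) by simp
      then have "v (- g + a) = v (- g)" using v_strict by blast
      then have "v (a - g) = v g" by (simp add: add.commute)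
      then show ?thesis using False by simp
    qed
  qed
  obtain k where k: "v (coeff F k) = 1" using some_unit_coeff[OF iF nz] by blast
  have "v (coeff F k) \<le> v (poly F a)" using gauss_pt[OF ac F0 hyp] .
  moreover have "v (poly F a) \<le> 1" using red_poly(2)[OF iF a(1)] .
  ultimately have "v (poly F a) = 1" using k by simp
  then have "red (poly F a) \<noteq> 0" using red_zero_iff[of "poly F a"] by simp
  moreover have "red (poly F a) = 0" using red_poly(1)[OF iF a(1)] a(2) rt by simp
  ultimately show False by simp
qed

lemma lift_inf:
  assumes ac: "\<forall>P::'a poly. degree P \<ge> 1 \<longrightarrow> (\<exists>x. poly P x = 0)"
    and iF: "intg F" and nz: "redp F \<noteq> 0" and lc: "red (lead_coeff F) = 0"
  shows "\<exists>\<alpha>. poly F \<alpha> = 0 \<and> v \<alpha> > 1"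
proof (rule ccontr)
  assume no: "\<not> ?thesis"
  have F0: "F \<noteq> 0" using nz by auto
  have hyp: "\<forall>g. poly F g = 0 \<longrightarrow> v g \<le> 1" using no by auto
  obtain k where k: "v (coeff F k) = 1" using some_unit_coeff[OF iF nz] by blast
  have "v (coeff F k) \<le> v (lead_coeff F)" using gauss_inf[OF ac F0 hyp] .
  moreover have "v (lead_coeff F) \<le> 1" using iF by simp
  ultimately have "v (lead_coeff F) = 1" using k by simp
  then have "red (lead_coeff F) \<noteq> 0" using red_zero_iff[of "lead_coeff F"] by simp
  then show False using lc by simp
qed

lemma nonprop:
  assumes iP: "intg P" and iQ: "intg Q"
    and Wb: "pderiv (redp P) * redp Q - redp P * pderiv (redp Q) \<noteq> 0"
  shows "\<forall>c. P \<noteq> smult c Q"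
proof (intro allI notI)
  fix c assume e: "P = smult c Q"
  show False
  proof (cases "v c \<le> 1")
    case True
    have rp: "redp P = smult (red c) (redp Q)" by (subst e) (rule intg_smult(2)[OF iQ True])
    have "pderiv (redp P) * redp Q - redp P * pderiv (redp Q) = 0" unfolding rp
      by (simp add: pderiv_smult mult.commute)
    then show False using Wb by blast
  next
    case False
    then have c0: "c \<noteq> 0" by auto
    have Qe: "Q = smult (inverse c) P" using e c0 by (simp add: smult_smult)
    have vi: "v (inverse c) < 1" using False v_inverse[of c] by (simp add: inverse_less_1_iff)
    then have ri: "red (inverse c) = 0" using red_zero_iff[of "inverse c"] by linarith
    have "redp Q = smult (red (inverse c)) (redp P)" by (subst Qe) (rule intg_smult(2)[OF iP less_imp_le[OF vi]])
    then have rq: "redp Q = 0" using ri by simp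
    have "pderiv (redp P) * redp Q - redp P * pderiv (redp Q) = 0" unfolding rq by simp
    then show False using Wb by blast
  qed
qed

end

theorem proposition3p6:
  fixes v :: "'a::field_char_0 \<Rightarrow> real" and p :: nat and K :: "'a set"
    and red :: "'a \<Rightarrow> 'k::field" and P Q :: "'a poly"
  assumes "finite_ext_Qp v p K"
    and "alg_closure_of K"
    and "residue_map v red"
    and "\<forall>i. coeff P i \<in> int_ring v K"
    and "\<forall>i. coeff Q i \<in> int_ring v K"
    and "good_reduction red P Q"
    and "height_is p (map_poly red P) (map_poly red Q) 0"
  shows "\<forall>z. critical_point (map_poly red P) (map_poly red Q) z \<longrightarrow>
           (\<exists>w. critical_point P Q w \<and> red_pt v red w = z)"
proof -
  have na: "nonarch_abs v" and pl: "v (of_nat p) < 1" and pr: "prime p"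
    using assms(1) unfolding finite_ext_Qp_def by auto
  interpret nav v red using na assms(3) by unfold_locales
  have ac: "\<forall>P::'a poly. degree P \<ge> 1 \<longrightarrow> (\<exists>x. poly P x = 0)"
    using assms(2) unfolding alg_closure_of_def by blast
  have iP: "intg P" using assms(4) unfolding int_ring_def by simp
  have iQ: "intg Q" using assms(5) unfolding int_ring_def by simp
  have cop: "coprime (redp P) (redp Q)" and rd: "rdeg (redp P) (redp Q) = rdeg P Q"
    using assms(6) unfolding good_reduction_def by auto
  have ch: "of_nat p = (0::'k)"
  proof -
    have "red (of_nat p) = 0" using red_zero_iff[OF v_of_nat[of p]] pl by simp
    then show ?thesis using red_of_nat[of p] by simp
  qed
  have Wb: "pderiv (redp P) * redp Q - redp P * pderiv (redp Q) \<noteq> 0"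
    using wronsk_nonzero[OF pr ch cop assms(7)] .
  define W where "W = pderiv P * Q - P * pderiv Q"
  have iW: "intg W" and rW: "redp W = pderiv (redp P) * redp Q - redp P * pderiv (redp Q)"
    unfolding W_def using red_wronsk[OF iP iQ] by auto
  have np: "\<forall>c. P \<noteq> smult c Q" using nonprop[OF iP iQ Wb] .
  have Q0: "Q \<noteq> 0"
  proof
    assume "Q = 0"
    then have "redp Q = 0" by simp
    then have "pderiv (redp P) * redp Q - redp P * pderiv (redp Q) = 0" by simp
    then show False using Wb by blast
  qed
  define d where "d = rdeg P Q"
  have rdb: "rdeg (redp P) (redp Q) = d" using rd d_def by simp
  have d1: "d \<ge> 1"
  proof (rule ccontr)
    assume "\<not> d \<ge> 1"
    then have "d = 0" by simp
    then have "degree (redp P) = 0" "degree (redp Q) = 0" using rdb unfolding rdeg_def by auto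
    then obtain a b where "redp P = [:a:]" "redp Q = [:b:]" by (metis degree_eq_zeroE)
    then have "pderiv (redp P) * redp Q - redp P * pderiv (redp Q) = 0" by (simp add: pderiv_pCons)
    then show False using Wb by blast
  qed
  have tb: "coeff (redp P) d \<noteq> 0 \<or> coeff (redp Q) d \<noteq> 0"
    and dPb: "degree (redp P) \<le> d" and dQb: "degree (redp Q) \<le> d"
    using topnz[OF rdb d1] by auto
  have ta: "coeff P d \<noteq> 0 \<or> coeff Q d \<noteq> 0" and dP: "degree P \<le> d" and dQ: "degree Q \<le> d"
    using topnz[OF d_def[symmetric] d1] by auto
  show ?thesis
  proof (intro allI impI)
    fix z assume cz: "critical_point (redp P) (redp Q) z"
    show "\<exists>w. critical_point P Q w \<and> red_pt v red w = z"
    proof (cases z)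
      case (Some b)
      have fl: "fin_local_deg (redp P) (redp Q) b \<ge> 2"
        using cz Some unfolding critical_point_def local_deg_def by simp
      have "poly (redp W) b = 0" unfolding rW using crit_to_W[OF fl] .
      then obtain \<alpha> where al: "v \<alpha> \<le> 1" "red \<alpha> = b" "poly W \<alpha> = 0"
        using lift_root[OF ac iW] rW Wb by metis
      have nc: "poly Q \<alpha> = 0 \<longrightarrow> poly P \<alpha> \<noteq> 0"
      proof
        assume q: "poly Q \<alpha> = 0"
        have "poly (redp Q) b = 0" using red_poly(1)[OF iQ al(1)] q al(2) by simp
        moreover have "\<not> (poly (redp P) b = 0 \<and> poly (redp Q) b = 0)"
        proof
          assume "poly (redp P) b = 0 \<and> poly (redp Q) b = 0"
          then have "[:-b,1:] dvd redp P" "[:-b,1:] dvd redp Q" using poly_eq_0_iff_dvd by blast+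
          then have "is_unit [:-b,1:]" using cop unfolding coprime_def by blast
          then show False by (simp add: is_unit_poly_iff)
        qed
        ultimately have "poly (redp P) b \<noteq> 0" by blast
        then have "red (poly P \<alpha>) \<noteq> 0" using red_poly(1)[OF iP al(1)] al(2) by simp
        then show "poly P \<alpha> \<noteq> 0" by auto
      qed
      have "fin_local_deg P Q \<alpha> \<ge> 2" using crit_W[OF np Q0 _ nc] al(3) unfolding W_def by blast
      then have "critical_point P Q (Some \<alpha>)" unfolding critical_point_def local_deg_def by simp
      moreover have "red_pt v red (Some \<alpha>) = z" using al Some unfolding red_pt_def by simp
      ultimately show ?thesis by blast
    next
      case None
      have fl: "fin_local_deg (rev_at d (redp P)) (rev_at d (redp Q)) 0 \<ge> 2"
        using cz None rdb unfolding critical_point_def local_deg_def by simp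
      have cz0: "coeff (redp P) (d - 1) * coeff (redp Q) d - coeff (redp P) d * coeff (redp Q) (d - 1) = 0"
        using crit_to_W[OF fl] wr_rev0[OF d1, of "redp P" "redp Q"] by simp
      define cW where "cW = coeff P d * coeff Q (d - 1) - coeff P (d - 1) * coeff Q d"
      have rc: "red cW = 0"
      proof -
        have "red cW = red (coeff P d) * red (coeff Q (d - 1)) - red (coeff P (d - 1)) * red (coeff Q d)"
          unfolding cW_def using iP iQ by (simp add: red_diff red_mult v_mult1)
        then show ?thesis using cz0 by (simp add: algebra_simps)
      qed
      show ?thesis
      proof (cases "cW = 0")
        case True
        have np': "\<forall>c. rev_at d P \<noteq> smult c (rev_at d Q)"
          using np rev_smult_inj[OF dP dQ] by blast
        have Q0': "rev_at d Q \<noteq> 0"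
        proof
          assume "rev_at d Q = 0"
          then have "rev_at d Q = smult 0 (rev_at d (0::'a poly))" by simp
          then have "Q = smult 0 0" using rev_smult_inj[OF dQ, of 0 0] by simp
          then show False using Q0 by simp
        qed
        have W0: "poly (pderiv (rev_at d P) * rev_at d Q - rev_at d P * pderiv (rev_at d Q)) 0 = 0"
          using wr_rev0[OF d1, of P Q] True unfolding cW_def by (simp add: algebra_simps)
        have nc: "poly (rev_at d Q) 0 = 0 \<longrightarrow> poly (rev_at d P) 0 \<noteq> 0"
          using ta by (auto simp: poly_0_coeff_0 coeff_rev_at)
        have "fin_local_deg (rev_at d P) (rev_at d Q) 0 \<ge> 2" using crit_W[OF np' Q0' W0 nc] .
        then have "critical_point P Q None" unfolding critical_point_def local_deg_def d_def by simp
        moreover have "red_pt v red None = z" using None unfolding red_pt_def by simp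
        ultimately show ?thesis by blast
      next
        case False
        have wt1: "coeff W (2 * d - 1) = 0" and wt2: "coeff W (2 * d - 2) = cW" and wd: "degree W \<le> 2 * d - 1"
          using wronsk_top[OF dP dQ d1] unfolding W_def cW_def by auto
        have W0: "W \<noteq> 0" using wt2 False by auto
        have dW: "degree W = 2 * d - 2"
        proof -
          have "degree W \<ge> 2 * d - 2" using wt2 False le_degree by metis
          moreover have "degree W \<noteq> 2 * d - 1" using wt1 W0 leading_coeff_0_iff by metis
          ultimately show ?thesis using wd d1 by linarith
        qed
        have lW: "lead_coeff W = cW" using dW wt2 by simp
        have "redp W \<noteq> 0" using rW Wb by simp
        then obtain \<alpha> where al: "poly W \<alpha> = 0" "v \<alpha> > 1"
          using lift_inf[OF ac iW] lW rc by metis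
        have redtop: "red (coeff F d) = 0" if iF: "intg F" and dF: "degree F \<le> d" and F0: "F \<noteq> 0"
          and r: "poly F \<alpha> = 0" for F
        proof (cases "degree F = d")
          case True
          have "v (lead_coeff F) < 1" using bigroot[OF iF r al(2)] .
          then show ?thesis using True red_zero_iff[of "lead_coeff F"] iF by simp
        next
          case False
          then have "coeff F d = 0" using dF by (intro coeff_eq_0) simp
          then show ?thesis by simp
        qed
        have nc: "poly Q \<alpha> = 0 \<longrightarrow> poly P \<alpha> \<noteq> 0"
        proof (intro impI notI)
          assume q: "poly Q \<alpha> = 0" and pa: "poly P \<alpha> = 0"
          have P0: "P \<noteq> 0" using np by (metis smult_0_left)
          have "red (coeff P d) = 0" using redtop[OF iP dP P0 pa] .
          moreover have "red (coeff Q d) = 0" using redtop[OF iQ dQ Q0 q] .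
          ultimately show False using tb by simp
        qed
        have "fin_local_deg P Q \<alpha> \<ge> 2" using crit_W[OF np Q0 _ nc] al(1) unfolding W_def by blast
        then have "critical_point P Q (Some \<alpha>)" unfolding critical_point_def local_deg_def by simp
        moreover have "red_pt v red (Some \<alpha>) = z" using al None unfolding red_pt_def by simp
        ultimately show ?thesis by blast
      qed
    qed
  qed
qed

end
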